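(* Let $1\le p\le 2$, let $X$ and $Y$ be Banach spaces such that $X$ has type $p$, and let $u:X\to Y$ be a continuous linear operator. If $(u(x_i))_{i=1}^\infty\in\ell_p\langle Y\rangle$ for every $(x_i)_{i=1}^\infty\in Rad(X)$, then $u^*:Y^*\to X^*$ is absolutely $p^*$-summing (equivalently, $u$ is Cohen strongly $p$-summing), where $\frac1p+\frac1{p^*}=1$.
   Context: $r_i$ denote the Rademacher functions. $Rad(X)$ is the space of sequences $(x_i)\subset X$ with $\left(\int_0^1\left\|\sum_{i=1}^\infty r_i(t)x_i\right\|^2dt\right)^{1/2}<\infty$. $X$ has type $p$ if there is $C\ge0$ with $\left(\int_0^1\left\|\sum_{i=1}^m r_i(t)x_i\right\|^2dt\right)^{1/2}\le C\left(\sum_{i=1}^m\|x_i\|^p\right)^{1/p}$ for all finite families in $X$. For $1\le s\le\infty$, $\ell_s^w(E)$ is the space of sequences with $\sup_{x^*\in B_{E^*}}\|(x^*(x_i))_i\|_s<\infty$, and $\ell_s(E)$ the space of sequences with $(\|x_i\|)_i\in\ell_s$. $\ell_p\langle Y\rangle$ is the space of sequences $(y_i)\subset Y$ with $\sup\{\sum_i|y_i^*(y_i)|:(y_i^* )\in B_{\ell_{p^*}^w(Y^* )}\}<\infty$. An operator $v:E\to F$ is absolutely $s$-summing if $(v(x_i))\in\ell_s(F)$ whenever $(x_i)\in\ell_s^w(E)$; $u$ is Cohen strongly $p$-summing if $(u(x_i))\in\ell_p\langle Y\rangle$ whenever $(x_i)\in\ell_p(X)$. *)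

theory Defs
  imports "HOL-Analysis.Analysis"
begin

text \<open>Rademacher functions. Sequences are indexed from 0, so index i here
corresponds to index i+1 in the paper: rademacher i t = r_(i+1)(t) = sign(sin(2^(i+1) pi t))
(up to the null set of dyadic points).\<close>
definition rademacher :: "nat \<Rightarrow> real \<Rightarrow> real" where
  "rademacher i t = (-1) ^ nat \<lfloor>2 ^ (i + 1) * t\<rfloor>"

definition conj_exp :: "real \<Rightarrow> ereal" where
  "conj_exp p = (if p = 1 then \<infinity> else ereal (p / (p - 1)))"

definition lp_in :: "ereal \<Rightarrow> (nat \<Rightarrow> real) \<Rightarrow> bool" where
  "lp_in s a = (if s = \<infinity> then bounded (range a)
                else summable (\<lambda>i. \<bar>a i\<bar> powr real_of_ereal s))"

definition lp_norm :: "ereal \<Rightarrow> (nat \<Rightarrow> real) \<Rightarrow> real" where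
  "lp_norm s a = (if s = \<infinity> then (SUP i. \<bar>a i\<bar>)
                  else (\<Sum>i. \<bar>a i\<bar> powr real_of_ereal s) powr (1 / real_of_ereal s))"

definition weak_lp :: "ereal \<Rightarrow> (nat \<Rightarrow> 'e::real_normed_vector) \<Rightarrow> bool" where
  "weak_lp s x = ((\<forall>\<phi>::'e \<Rightarrow>\<^sub>L real. lp_in s (\<lambda>i. blinfun_apply \<phi> (x i))) \<and>
     bdd_above {lp_norm s (\<lambda>i. blinfun_apply \<phi> (x i)) | \<phi>::'e \<Rightarrow>\<^sub>L real. norm \<phi> \<le> 1})"

definition weak_lp_norm :: "ereal \<Rightarrow> (nat \<Rightarrow> 'e::real_normed_vector) \<Rightarrow> real" where
  "weak_lp_norm s x = Sup {lp_norm s (\<lambda>i. blinfun_apply \<phi> (x i)) | \<phi>::'e \<Rightarrow>\<^sub>L real. norm \<phi> \<le> 1}"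

definition strong_lp :: "ereal \<Rightarrow> (nat \<Rightarrow> 'e::real_normed_vector) \<Rightarrow> bool" where
  "strong_lp s x = lp_in s (\<lambda>i. norm (x i))"

definition cohen_lp :: "real \<Rightarrow> (nat \<Rightarrow> 'b::real_normed_vector) \<Rightarrow> bool" where
  "cohen_lp p y =
     ((\<forall>ys::nat \<Rightarrow> ('b \<Rightarrow>\<^sub>L real). weak_lp (conj_exp p) ys \<and> weak_lp_norm (conj_exp p) ys \<le> 1 \<longrightarrow>
         summable (\<lambda>i. \<bar>blinfun_apply (ys i) (y i)\<bar>)) \<and>
      bdd_above {(\<Sum>i. \<bar>blinfun_apply (ys i) (y i)\<bar>) | ys::nat \<Rightarrow> ('b \<Rightarrow>\<^sub>L real).
                   weak_lp (conj_exp p) ys \<and> weak_lp_norm (conj_exp p) ys \<le> 1})"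

definition Rad :: "(nat \<Rightarrow> 'a::banach) set" where
  "Rad = {x. (AE t in lborel. t \<in> {0..1} \<longrightarrow> summable (\<lambda>i. rademacher i t *\<^sub>R x i)) \<and>
            (\<integral>\<^sup>+ t\<in>{0..1}. ennreal ((norm (\<Sum>i. rademacher i t *\<^sub>R x i))\<^sup>2) \<partial>lborel) < \<infinity>}"

definition has_type :: "real \<Rightarrow> 'a::real_normed_vector itself \<Rightarrow> bool" where
  "has_type p _ = (\<exists>C\<ge>0. \<forall>(m::nat) (x::nat \<Rightarrow> 'a).
      sqrt (LINT t:{0..1}|lborel. (norm (\<Sum>i<m. rademacher i t *\<^sub>R x i))\<^sup>2)
        \<le> C * (\<Sum>i<m. norm (x i) powr p) powr (1 / p))"

definition abs_summing :: "ereal \<Rightarrow> ('e::real_normed_vector \<Rightarrow> 'f::real_normed_vector) \<Rightarrow> bool" where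
  "abs_summing s v = (\<forall>x. weak_lp s x \<longrightarrow> strong_lp s (\<lambda>i. v (x i)))"

definition cohen_strongly_summing :: "real \<Rightarrow> ('a::real_normed_vector \<Rightarrow> 'b::real_normed_vector) \<Rightarrow> bool" where
  "cohen_strongly_summing p u = (\<forall>x. strong_lp (ereal p) x \<longrightarrow> cohen_lp p (\<lambda>i. u (x i)))"

definition adjoint_op :: "('a::real_normed_vector \<Rightarrow>\<^sub>L 'b::real_normed_vector) \<Rightarrow> ('b \<Rightarrow>\<^sub>L real) \<Rightarrow> ('a \<Rightarrow>\<^sub>L real)" where
  "adjoint_op u = (\<lambda>f. f o\<^sub>L u)"

end

theory Submission
  imports Defs
begin

definition Om :: "nat \<Rightarrow> (nat \<Rightarrow> real) set" where
  "Om n = PiE {..<n} (\<lambda>_. {-1, 1})"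
definition RR :: "nat \<Rightarrow> real \<Rightarrow> nat \<Rightarrow> real" where
  "RR n t = (\<lambda>i. if i < n then rademacher i t else undefined)"
definition cns :: "real \<Rightarrow> (nat \<Rightarrow> real) \<Rightarrow> nat \<Rightarrow> real" where
  "cns a e = (\<lambda>i. if i = 0 then a else e (i - 1))"

lemma rad0_lo: "0 \<le> t \<Longrightarrow> t < 1/2 \<Longrightarrow> rademacher 0 t = 1"
proof -
  assume "0 \<le> t" "t < 1/2"
  then have "\<lfloor>2 * t\<rfloor> = 0" by (simp add: floor_eq_iff)
  then show ?thesis by (simp add: rademacher_def)
qed

lemma rad0_hi: "1/2 \<le> t \<Longrightarrow> t < 1 \<Longrightarrow> rademacher 0 t = -1"
proof -
  assume "1/2 \<le> t" "t < 1"
  then have "\<lfloor>2 * t\<rfloor> = 1" by (simp add: floor_eq_iff)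
  then show ?thesis by (simp add: rademacher_def)
qed

lemma radS_lo: "rademacher (Suc i) t = rademacher i (2*t)"
  by (simp add: rademacher_def mult.assoc)

lemma radS_hi: assumes "1/2 \<le> t" shows "rademacher (Suc i) t = rademacher i (2*t-1)"
proof -
  have e: "(2::real)^(Suc i + 1) * t = 2^(i+1) * (2*t - 1) + of_int (2^(i+1))"
    by (simp add: algebra_simps)
  have "\<lfloor>(2::real)^(Suc i + 1) * t\<rfloor> = \<lfloor>2^(i+1) * (2*t - 1)\<rfloor> + 2^(i+1)"
    unfolding e by (subst floor_add_int) simp
  moreover have "0 \<le> \<lfloor>(2::real)^(i+1) * (2*t - 1)\<rfloor>" using assms by simp
  ultimately have "nat \<lfloor>(2::real)^(Suc i + 1) * t\<rfloor> = nat \<lfloor>2^(i+1) * (2*t - 1)\<rfloor> + 2^(i+1)"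
    using nat_power_eq[of "2::int" "i+1"] by (simp add: nat_add_distrib)
  then show ?thesis by (simp add: rademacher_def power_add)
qed

lemma Om_Suc: "Om (Suc n) = cns 1 ` Om n \<union> cns (-1) ` Om n"
proof
  show "Om (Suc n) \<subseteq> cns 1 ` Om n \<union> cns (-1) ` Om n"
  proof
    fix e assume e: "e \<in> Om (Suc n)"
    define e' where "e' = (\<lambda>i. if i < n then e (Suc i) else undefined)"
    have e'O: "e' \<in> Om n" using e unfolding Om_def e'_def PiE_def Pi_def extensional_def by auto
    have ee: "e = cns (e 0) e'"
      using e unfolding Om_def e'_def cns_def PiE_def extensional_def
      by (auto simp: fun_eq_iff)
    have "e 0 \<in> {-1,1}" using e unfolding Om_def by auto
    then show "e \<in> cns 1 ` Om n \<union> cns (-1) ` Om n" using ee e'O by auto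
  qed
next
  have "cns a e \<in> Om (Suc n)" if "a = 1 \<or> a = -1" "e \<in> Om n" for a e
  proof -
    have "cns a e i \<in> {-1,1}" if "i < Suc n" for i
      using that \<open>a = 1 \<or> a = -1\<close> \<open>e \<in> Om n\<close> by (cases i) (auto simp: cns_def Om_def)
    moreover have "cns a e i = undefined" if "\<not> i < Suc n" for i
      using that \<open>e \<in> Om n\<close> by (cases i) (auto simp: cns_def Om_def)
    ultimately show ?thesis by (auto simp: Om_def PiE_iff extensional_def)
  qed
  then show "cns 1 ` Om n \<union> cns (-1) ` Om n \<subseteq> Om (Suc n)" by auto
qed

lemma cns_inj: "inj (cns a)"
proof (rule injI)
  fix x y assume "cns a x = cns a y"
  then have "\<And>i. cns a x (Suc i) = cns a y (Suc i)" by simp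
  then show "x = y" by (simp add: cns_def fun_eq_iff)
qed

lemma finite_Om: "finite (Om n)" unfolding Om_def by (simp add: finite_PiE)

lemma card_Om: "card (Om n) = 2^n" unfolding Om_def by (simp add: card_PiE numeral_2_eq_2)

lemma sum_Om_Suc: "(\<Sum>e\<in>Om (Suc n). h e) = (\<Sum>e\<in>Om n. h (cns 1 e)) + (\<Sum>e\<in>Om n. h (cns (-1) e))"
proof -
  have d: "cns 1 ` Om n \<inter> cns (-1) ` Om n = {}" by (auto dest!: arg_cong[where f="\<lambda>f. f 0"] simp: cns_def)
  have "(\<Sum>e\<in>Om (Suc n). h e) = (\<Sum>e\<in>cns 1 ` Om n. h e) + (\<Sum>e\<in>cns (-1) ` Om n. h e)"
    unfolding Om_Suc by (rule sum.union_disjoint) (auto simp: finite_Om d)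
  also have "\<dots> = (\<Sum>e\<in>Om n. h (cns 1 e)) + (\<Sum>e\<in>Om n. h (cns (-1) e))"
    by (simp add: sum.reindex inj_on_def cns_inj[THEN injD])
  finally show ?thesis .
qed

lemma RR_lo: "0 \<le> t \<Longrightarrow> t < 1/2 \<Longrightarrow> RR (Suc n) t = cns 1 (RR n (2*t))"
  by (auto simp: RR_def cns_def fun_eq_iff rad0_lo radS_lo[symmetric] split: nat.splits)

lemma RR_hi: "1/2 \<le> t \<Longrightarrow> t < 1 \<Longrightarrow> RR (Suc n) t = cns (-1) (RR n (2*t-1))"
  by (auto simp: RR_def cns_def fun_eq_iff rad0_hi radS_hi[symmetric] split: nat.splits)

lemma disc_integral:
  fixes h :: "(nat \<Rightarrow> real) \<Rightarrow> real"
  shows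
  "((\<lambda>t. h (RR n t)) has_integral (\<Sum>e\<in>Om n. h e) / 2^n) {0..1}"
proof (induction n arbitrary: h)
  case 0
  have "RR 0 = (\<lambda>t. (\<lambda>i. undefined))" by (simp add: RR_def fun_eq_iff)
  then show ?case using has_integral_const_real[of "h (\<lambda>i. undefined)" 0 1] by (simp add: Om_def)
next
  case (Suc n)
  let ?A1 = "(\<Sum>e\<in>Om n. h (cns 1 e)) / 2^n"
  let ?A2 = "(\<Sum>e\<in>Om n. h (cns (-1) e)) / 2^n"
  have I1: "((\<lambda>s. h (cns 1 (RR n s))) has_integral ?A1) {0..1}" using Suc.IH .
  have I2: "((\<lambda>s. h (cns (-1) (RR n s))) has_integral ?A2) {0..1}" using Suc.IH .
  have im1: "(\<lambda>x::real. (1/2) *\<^sub>R x + - ((1/2) *\<^sub>R 0)) ` cbox 0 1 = {0..1/2}"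
    by (auto simp: image_iff cbox_interval intro!: bexI[where x="2*_"])
  have im2: "(\<lambda>x::real. (1/2) *\<^sub>R x + - ((1/2) *\<^sub>R -1)) ` cbox 0 1 = {1/2..1}"
    by (auto simp: image_iff cbox_interval field_simps intro!: bexI[where x="2*_-1"])
  have a1: "((\<lambda>x. h (cns 1 (RR n (2 * x)))) has_integral (1/2) * ?A1) {0..1/2}"
    using has_integral_affinity[OF I1[folded cbox_interval], of 2 0] im1 by simp
  have a2: "((\<lambda>x. h (cns (-1) (RR n (2 * x - 1)))) has_integral (1/2) * ?A2) {1/2..1}"
    using has_integral_affinity[OF I2[folded cbox_interval], of 2 "-1"] im2 by simp
  have b1: "((\<lambda>t. h (RR (Suc n) t)) has_integral (1/2) * ?A1) {0..1/2}"
    apply (rule has_integral_spike_finite[of "{1/2}", OF _ _ a1])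
    using RR_lo by auto
  have b2: "((\<lambda>t. h (RR (Suc n) t)) has_integral (1/2) * ?A2) {1/2..1}"
    apply (rule has_integral_spike_finite[of "{1}", OF _ _ a2])
    using RR_hi by (auto simp: algebra_simps)
  have "((\<lambda>t. h (RR (Suc n) t)) has_integral ((1/2) * ?A1 + (1/2) * ?A2)) {0..1}"
    by (rule has_integral_combine[OF _ _ b1 b2]) auto
  moreover have "(1/2) * ?A1 + (1/2) * ?A2 = (\<Sum>e\<in>Om (Suc n). h e) / 2^Suc n"
    by (simp add: sum_Om_Suc field_simps)
  ultimately show ?case by simp
qed

lemma rad_pm: "rademacher i t = 1 \<or> rademacher i t = -1"
  unfolding rademacher_def by (metis neg_one_even_power neg_one_odd_power)  

lemma rad_meas[measurable]: "rademacher i \<in> borel_measurable borel"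
proof -
  have m1: "(\<lambda>t::real. (2::real)^(i+1) * t) \<in> borel_measurable borel"
    by (intro borel_measurable_continuous_onI continuous_intros)
  have m2: "(\<lambda>t. \<lfloor>(2::real)^(i+1) * t\<rfloor>) \<in> measurable borel (count_space UNIV)"
    using measurable_compose[OF m1 measurable_real_floor] by simp
  have m3: "(\<lambda>z::int. (-1::real) ^ nat z) \<in> measurable (count_space UNIV) borel" by simp
  have "rademacher i = (\<lambda>t. (\<lambda>z::int. (-1::real) ^ nat z) (\<lfloor>(2::real)^(i+1) * t\<rfloor>))"
    by (simp add: rademacher_def fun_eq_iff)
  then show ?thesis using measurable_compose[OF m2 m3] by simp
qed

lemma RR_Om: "RR n t \<in> Om n"
  using rad_pm by (auto simp: RR_def Om_def PiE_iff extensional_def)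

lemma RR_meas:
  fixes h :: "(nat \<Rightarrow> real) \<Rightarrow> real"
  shows "(\<lambda>t. h (RR n t)) \<in> borel_measurable borel"
proof -
  have eq: "(\<lambda>t. h (RR n t)) = (\<lambda>t. \<Sum>e\<in>Om n. h e * indicator {t. RR n t = e} t)"
  proof
    fix t
    have "(\<Sum>e\<in>Om n. h e * indicator {t. RR n t = e} t) = (\<Sum>e\<in>{RR n t}. h e * indicator {t. RR n t = e} t)"
      by (rule sum.mono_neutral_right) (auto simp: finite_Om RR_Om)
    then show "h (RR n t) = (\<Sum>e\<in>Om n. h e * indicator {t. RR n t = e} t)" by simp
  qed
  have S: "{t. RR n t = e} \<in> sets borel" for e
  proof (cases "\<forall>i. n \<le> i \<longrightarrow> e i = undefined")
    case True
    then have "{t. RR n t = e} = (\<Inter>i<n. {t. rademacher i t = e i}) \<inter> UNIV"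
    proof (intro equalityI subsetI)
      fix t assume "t \<in> {t. RR n t = e}"
      then have "\<And>i. i < n \<Longrightarrow> rademacher i t = e i" unfolding RR_def by (auto dest: fun_cong)
      then show "t \<in> (\<Inter>i<n. {t. rademacher i t = e i}) \<inter> UNIV" by auto
    next
      fix t assume "t \<in> (\<Inter>i<n. {t. rademacher i t = e i}) \<inter> UNIV"
      then have "RR n t i = e i" for i using True unfolding RR_def by (cases "i < n") auto
      then show "t \<in> {t. RR n t = e}" by auto
    qed
    moreover have "(\<Inter>i<n. {t. rademacher i t = e i}) \<in> sets borel"
    proof (cases "n = 0")
      case False
      have "\<And>i. {t. rademacher i t = e i} \<in> sets borel"
        using measurable_sets[OF rad_meas, of "{e _}"] by (simp add: vimage_def)
      then show ?thesis using False by (intro sets.finite_INT) auto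
    qed simp
    ultimately show ?thesis by simp
  next
    case False
    then have "{t. RR n t = e} = {}"
    proof -
      obtain i where i: "n \<le> i" "e i \<noteq> undefined" using False by blast
      have "RR n t \<noteq> e" for t
      proof
        assume "RR n t = e"
        then have "RR n t i = e i" by simp
        then show False using i unfolding RR_def by simp
      qed
      then show ?thesis by auto
    qed
    then show ?thesis by simp
  qed
  show ?thesis unfolding eq
    by (intro borel_measurable_sum borel_measurable_times borel_measurable_const borel_measurable_indicator S)
qed

lemma disc_nn:
  fixes h :: "(nat \<Rightarrow> real) \<Rightarrow> real"
  assumes "\<And>e. e \<in> Om n \<Longrightarrow> 0 \<le> h e"
  shows "(\<integral>\<^sup>+ t\<in>{0..1}. ennreal (h (RR n t)) \<partial>lborel) = ennreal ((\<Sum>e\<in>Om n. h e) / 2^n)"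
  using nn_integral_has_integral_lebesgue'[OF _ disc_integral[of h n]] assms RR_Om by auto

lemma disc_lint:
  fixes h :: "(nat \<Rightarrow> real) \<Rightarrow> real"
  assumes "\<And>e. e \<in> Om n \<Longrightarrow> 0 \<le> h e"
  shows "(LINT t:{0..1}|lborel. h (RR n t)) = (\<Sum>e\<in>Om n. h e) / 2^n"
proof -
  have m: "(\<lambda>t. indicator {0..1} t *\<^sub>R h (RR n t)) \<in> borel_measurable lborel"
    using RR_meas[of h n] by measurable
  have "(LINT t:{0..1}|lborel. h (RR n t)) = enn2real (\<integral>\<^sup>+ t. ennreal (indicator {0..1} t *\<^sub>R h (RR n t)) \<partial>lborel)"
    unfolding set_lebesgue_integral_def
    by (rule integral_eq_nn_integral[OF m]) (use assms RR_Om in \<open>auto simp: indicator_def\<close>)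
  also have "(\<integral>\<^sup>+ t. ennreal (indicator {0..1} t *\<^sub>R h (RR n t)) \<partial>lborel) = (\<integral>\<^sup>+ t\<in>{0..1}. ennreal (h (RR n t)) \<partial>lborel)"
    by (rule nn_integral_cong) (auto simp: indicator_def)
  also have "\<dots> = ennreal ((\<Sum>e\<in>Om n. h e) / 2^n)" by (rule disc_nn[OF assms])
  finally show ?thesis using assms by (simp add: sum_nonneg)
qed

lemma disc_measure:
  "emeasure lborel ({0..1} \<inter> {t. P (RR n t)}) = ennreal (real (card {e\<in>Om n. P e}) / 2^n)"
proof -
  have s: "{t. P (RR n t)} \<in> sets borel"
  proof -
    have "indicator {t. P (RR n t)} = (\<lambda>t. indicator {e. P e} (RR n t) :: real)"
      by (auto simp: fun_eq_iff indicator_def)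
    then have "(indicator {t. P (RR n t)} :: real \<Rightarrow> real) \<in> borel_measurable borel"
      using RR_meas by metis
    then show ?thesis using borel_measurable_indicator_iff by (metis Int_UNIV_right space_borel)
  qed
  have "emeasure lborel ({0..1} \<inter> {t. P (RR n t)}) = (\<integral>\<^sup>+ t. indicator ({0..1} \<inter> {t. P (RR n t)}) t \<partial>lborel)"
    using s by (simp add: nn_integral_indicator)
  also have "\<dots> = (\<integral>\<^sup>+ t\<in>{0..1}. ennreal (indicator {e. P e} (RR n t)) \<partial>lborel)"
    by (rule nn_integral_cong) (auto simp: indicator_def)
  also have "\<dots> = ennreal ((\<Sum>e\<in>Om n. indicator {e. P e} e) / 2^n)"
    by (rule disc_nn) auto
  also have "(\<Sum>e\<in>Om n. indicator {e. P e} e :: real) = real (card {e\<in>Om n. P e})"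
    by (simp add: indicator_def sum.If_cases finite_Om Int_def conj_commute)
  finally show ?thesis .
qed

lemma RR_lt: "i < n \<Longrightarrow> RR n t i = rademacher i t"
  by (simp add: RR_def)

lemma sum_RR: "m \<le> n \<Longrightarrow> (\<Sum>i<m. RR n t i *\<^sub>R w i) = (\<Sum>i<m. rademacher i t *\<^sub>R w i)"
  by (intro sum.cong) (auto simp: RR_lt)

lemma type_disc:
  assumes "has_type p TYPE('a::real_normed_vector)"
  obtains C where "C \<ge> 0" "\<And>m n (w::nat \<Rightarrow> 'a). m \<le> n \<Longrightarrow>
     (\<Sum>e\<in>Om n. (norm (\<Sum>i<m. e i *\<^sub>R w i))\<^sup>2) / 2^n \<le> (C * (\<Sum>i<m. norm (w i) powr p) powr (1/p))\<^sup>2"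
proof -
  obtain C where C: "C \<ge> 0" "\<And>(m::nat) (x::nat \<Rightarrow> 'a).
      sqrt (LINT t:{0..1}|lborel. (norm (\<Sum>i<m. rademacher i t *\<^sub>R x i))\<^sup>2)
        \<le> C * (\<Sum>i<m. norm (x i) powr p) powr (1 / p)"
    using assms unfolding has_type_def by blast
  have "(\<Sum>e\<in>Om n. (norm (\<Sum>i<m. e i *\<^sub>R w i))\<^sup>2) / 2^n \<le> (C * (\<Sum>i<m. norm (w i) powr p) powr (1/p))\<^sup>2"
    if "m \<le> n" for m n and w :: "nat \<Rightarrow> 'a"
  proof -
    let ?D = "(\<Sum>e\<in>Om n. (norm (\<Sum>i<m. e i *\<^sub>R w i))\<^sup>2) / 2^n"
    have "(LINT t:{0..1}|lborel. (norm (\<Sum>i<m. rademacher i t *\<^sub>R w i))\<^sup>2)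
        = (LINT t:{0..1}|lborel. (\<lambda>e. (norm (\<Sum>i<m. e i *\<^sub>R w i))\<^sup>2) (RR n t))"
      by (simp only: sum_RR[OF that])
    also have "\<dots> = ?D" by (rule disc_lint) simp
    finally have "sqrt ?D \<le> C * (\<Sum>i<m. norm (w i) powr p) powr (1/p)" using C(2)[where m=m and x=w] by simp
    moreover have "?D \<ge> 0" by (simp add: sum_nonneg)
    ultimately have "(sqrt ?D)\<^sup>2 \<le> (C * (\<Sum>i<m. norm (w i) powr p) powr (1/p))\<^sup>2"
      by (intro power_mono) auto
    then show ?thesis using \<open>?D \<ge> 0\<close> by simp
  qed
  then show ?thesis using that C(1) by blast
qed

lemma levy:
  fixes w :: "nat \<Rightarrow> 'a::real_normed_vector"
  shows "card {e\<in>Om n. \<exists>j\<le>n. s < norm (\<Sum>i<j. e i *\<^sub>R w i)}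
     \<le> 2 * card {e\<in>Om n. s < norm (\<Sum>i<n. e i *\<^sub>R w i)}"
proof -
  define P where "P j e = (\<Sum>i<j. e i *\<^sub>R w i)" for j e
  define A where "A = {e\<in>Om n. \<exists>j\<le>n. s < norm (P j e)}"
  define B where "B = {e\<in>Om n. s < norm (P n e)}"
  define k where "k e = (LEAST j. j \<le> n \<and> s < norm (P j e))" for e
  define flip where "flip e = (\<lambda>i. if k e \<le> i \<and> i < n then - e i else e i)" for e
  have k1: "k e \<le> n \<and> s < norm (P (k e) e)" if "e \<in> A" for e
  proof -
    from that have "\<exists>j. j \<le> n \<and> s < norm (P j e)" by (simp add: A_def)
    then obtain j where "j \<le> n \<and> s < norm (P j e)" ..
    then show ?thesis unfolding k_def by (rule LeastI)
  qed
  have k2: "\<not> s < norm (P j e)" if "e \<in> A" "j < k e" for e j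
    using that k1[OF that(1)] not_less_Least[of j "\<lambda>j. j \<le> n \<and> s < norm (P j e)"]
    unfolding k_def by auto
  have fO: "flip e \<in> Om n" if "e \<in> Om n" for e
    using that unfolding Om_def flip_def PiE_iff extensional_def by auto
  have fP: "P j (flip e) = P j e" if "j \<le> k e" for e j
    unfolding P_def flip_def using that by (intro sum.cong) auto
  have fA: "flip e \<in> A \<and> k (flip e) = k e" if "e \<in> A" for e
  proof -
    have eO: "e \<in> Om n" using that by (simp add: A_def)
    have a: "k e \<le> n \<and> s < norm (P (k e) (flip e))" using k1[OF that] fP[of "k e" e] by simp
    then have "flip e \<in> A" using fO[OF eO] unfolding A_def by blast
    moreover have "k (flip e) = k e"
      unfolding k_def
    proof (rule Least_equality)
      show "(LEAST j. j \<le> n \<and> s < norm (P j e)) \<le> n \<and> s < norm (P (LEAST j. j \<le> n \<and> s < norm (P j e)) (flip e))"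
        using a unfolding k_def .
      fix y assume y: "y \<le> n \<and> s < norm (P y (flip e))"
      show "(LEAST j. j \<le> n \<and> s < norm (P j e)) \<le> y"
      proof (rule ccontr)
        assume "\<not> (LEAST j. j \<le> n \<and> s < norm (P j e)) \<le> y"
        then have "y < k e" unfolding k_def by simp
        then show False using k2[OF that, of y] fP[of y e] y by simp
      qed
    qed
    ultimately show ?thesis by simp
  qed
  have ff: "flip (flip e) = e" if "e \<in> A" for e
    using fA[OF that] unfolding flip_def[of "flip e"] by (auto simp: fun_eq_iff flip_def)
  have sum2: "P n e + P n (flip e) = 2 *\<^sub>R P (k e) e" if "e \<in> A" for e
  proof -
    have kn: "k e \<le> n" using k1[OF that] by simp
    have "P n e + P n (flip e) = (\<Sum>i<n. (e i + flip e i) *\<^sub>R w i)"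
      unfolding P_def by (simp add: sum.distrib scaleR_add_left)
    also have "\<dots> = (\<Sum>i\<in>{..<n}. if i < k e then (2 * e i) *\<^sub>R w i else 0)"
      by (intro sum.cong) (auto simp: flip_def)
    also have "\<dots> = (\<Sum>i\<in>{..<n} \<inter> {i. i < k e}. (2 * e i) *\<^sub>R w i)"
      by (simp add: sum.inter_restrict)
    also have "{..<n} \<inter> {i. i < k e} = {..<k e}" using kn by auto
    also have "(\<Sum>i\<in>{..<k e}. (2 * e i) *\<^sub>R w i) = 2 *\<^sub>R P (k e) e"
      unfolding P_def by (simp add: scaleR_sum_right)
    finally show ?thesis .
  qed
  have or: "e \<in> B \<or> flip e \<in> B" if "e \<in> A" for e
  proof (rule ccontr)
    assume "\<not> (e \<in> B \<or> flip e \<in> B)"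
    then have "norm (P n e) \<le> s" "norm (P n (flip e)) \<le> s"
      using that fA[OF that] unfolding A_def B_def by auto
    then have "norm (P n e + P n (flip e)) \<le> 2 * s" using norm_triangle_ineq[of "P n e" "P n (flip e)"] by linarith
    then show False using sum2[OF that] k1[OF that] by simp
  qed
  have AB: "A \<subseteq> B \<union> flip ` (A \<inter> B)"
  proof
    fix e assume e: "e \<in> A"
    show "e \<in> B \<union> flip ` (A \<inter> B)"
    proof (cases "e \<in> B")
      case False
      then have "flip e \<in> A \<inter> B" using or[OF e] fA[OF e] by simp
      then show ?thesis using ff[OF e] by (metis UnI2 image_eqI)
    qed simp
  qed
  have fin: "finite B" "finite (A \<inter> B)" unfolding A_def B_def by (auto intro: finite_subset[OF _ finite_Om])
  have "card A \<le> card (B \<union> flip ` (A \<inter> B))"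
    by (rule card_mono) (use fin AB in auto)
  also have "\<dots> \<le> card B + card (flip ` (A \<inter> B))" by (rule card_Un_le)
  also have "card (flip ` (A \<inter> B)) \<le> card (A \<inter> B)" by (rule card_image_le) (use fin in auto)
  also have "card (A \<inter> B) \<le> card B" by (rule card_mono) (use fin in auto)
  finally show ?thesis unfolding A_def B_def P_def by simp
qed

lemma cheb:
  assumes "s > 0"
  shows "real (card {e\<in>Om n. s < norm (F e)}) * s\<^sup>2 \<le> (\<Sum>e\<in>Om n. (norm (F e))\<^sup>2)"
proof -
  let ?B = "{e\<in>Om n. s < norm (F e)}"
  have "real (card ?B) * s\<^sup>2 = (\<Sum>e\<in>?B. s\<^sup>2)" by simp
  also have "\<dots> \<le> (\<Sum>e\<in>?B. (norm (F e))\<^sup>2)"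
    by (rule sum_mono) (use assms in \<open>auto intro: power_strict_mono less_imp_le\<close>)
  also have "\<dots> \<le> (\<Sum>e\<in>Om n. (norm (F e))\<^sup>2)"
    by (rule sum_mono2) (auto simp: finite_Om)
  finally show ?thesis .
qed

lemma block_measure:
  fixes w :: "nat \<Rightarrow> 'a::real_normed_vector"
  assumes s: "s > 0" and C: "\<And>m n (w::nat \<Rightarrow> 'a). m \<le> n \<Longrightarrow>
     (\<Sum>e\<in>Om n. (norm (\<Sum>i<m. e i *\<^sub>R w i))\<^sup>2) / 2^n \<le> (C * (\<Sum>i<m. norm (w i) powr p) powr (1/p))\<^sup>2"
  shows "emeasure lborel ({0..1} \<inter> {t. \<exists>j\<le>n. s < norm (\<Sum>i<j. rademacher i t *\<^sub>R w i)})
     \<le> ennreal (2 * (C * (\<Sum>i<n. norm (w i) powr p) powr (1/p))\<^sup>2 / s\<^sup>2)"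
proof -
  let ?Q = "\<lambda>e. \<exists>j\<le>n. s < norm (\<Sum>i<j. e i *\<^sub>R w i)"
  have "{t. \<exists>j\<le>n. s < norm (\<Sum>i<j. rademacher i t *\<^sub>R w i)} = {t. ?Q (RR n t)}"
    by (auto simp: sum_RR)
  then have "emeasure lborel ({0..1} \<inter> {t. \<exists>j\<le>n. s < norm (\<Sum>i<j. rademacher i t *\<^sub>R w i)})
     = ennreal (real (card {e\<in>Om n. ?Q e}) / 2^n)"
    using disc_measure[of ?Q n] by simp
  also have "real (card {e\<in>Om n. ?Q e}) / 2^n \<le> 2 * real (card {e\<in>Om n. s < norm (\<Sum>i<n. e i *\<^sub>R w i)}) / 2^n"
    using levy[of n s w] by (simp add: divide_right_mono)
  also have "\<dots> \<le> 2 * ((\<Sum>e\<in>Om n. (norm (\<Sum>i<n. e i *\<^sub>R w i))\<^sup>2) / s\<^sup>2) / 2^n"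
    using cheb[OF s, of n "\<lambda>e. \<Sum>i<n. e i *\<^sub>R w i"] s
    by (intro divide_right_mono mult_left_mono) (auto simp: field_simps)
  also have "\<dots> = 2 * ((\<Sum>e\<in>Om n. (norm (\<Sum>i<n. e i *\<^sub>R w i))\<^sup>2) / 2^n) / s\<^sup>2" by simp
  also have "\<dots> \<le> 2 * (C * (\<Sum>i<n. norm (w i) powr p) powr (1/p))\<^sup>2 / s\<^sup>2"
    using C[of n n w] by (intro divide_right_mono mult_left_mono) auto
  finally show ?thesis by (simp add: ennreal_leI)
qed

lemma RR_sets: "{t. P (RR n t)} \<in> sets borel"
proof -
  have "indicator {t. P (RR n t)} = (\<lambda>t. indicator {e. P e} (RR n t) :: real)"
    by (auto simp: fun_eq_iff indicator_def)
  then have "(indicator {t. P (RR n t)} :: real \<Rightarrow> real) \<in> borel_measurable borel"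
    using RR_meas by metis
  then show ?thesis using borel_measurable_indicator_iff by (metis Int_UNIV_right space_borel)
qed

lemma rad_set_sets:
  fixes w :: "nat \<Rightarrow> 'a::real_normed_vector"
  shows "{0..1} \<inter> {t. \<exists>j\<le>n. s < norm (\<Sum>i<j. rademacher i t *\<^sub>R w i)} \<in> sets borel"
proof -
  have eq: "{t. \<exists>j\<le>n. s < norm (\<Sum>i<j. rademacher i t *\<^sub>R w i)} = {t. (\<lambda>e. \<exists>j\<le>n. s < norm (\<Sum>i<j. e i *\<^sub>R w i)) (RR n t)}"
    by (auto simp: sum_RR)
  have "{0..1::real} \<in> sets borel" by simp
  moreover have "{t. \<exists>j\<le>n. s < norm (\<Sum>i<j. rademacher i t *\<^sub>R w i)} \<in> sets borel"
    unfolding eq by (rule RR_sets)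
  ultimately show ?thesis by (rule sets.Int)
qed

lemma block_index:
  assumes "strict_mono (N :: nat \<Rightarrow> nat)" "N k0 \<le> j"
  shows "\<exists>k\<ge>k0. N k \<le> j \<and> j < N (Suc k)"
proof -
  have ex: "j < N (Suc j)" using seq_suble[OF assms(1), of "Suc j"] by simp
  define m where "m = (LEAST m. j < N m)"
  have m1: "j < N m" unfolding m_def by (rule LeastI, rule ex)
  have m2: "k0 < m"
  proof (rule ccontr)
    assume "\<not> k0 < m"
    then have "N m \<le> N k0" using strict_mono_less_eq[OF assms(1)] by simp
    then show False using m1 assms(2) by simp
  qed
  have "m - 1 < (LEAST m. j < N m)" using m2 unfolding m_def by simp
  then have "\<not> j < N (m - 1)" by (rule not_less_Least)
  then show ?thesis using m1 m2 by (intro exI[of _ "m - 1"]) auto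
qed

lemma sum_block:
  fixes f :: "nat \<Rightarrow> 'a::ab_group_add"
  assumes "a \<le> j" "j \<le> b"
  shows "(\<Sum>i<j. if a \<le> i \<and> i < b then f i else 0) = (\<Sum>i<j. f i) - (\<Sum>i<a. f i)"
proof -
  have "(\<Sum>i<j. if a \<le> i \<and> i < b then f i else 0) = (\<Sum>i\<in>{..<j} \<inter> {i. a \<le> i \<and> i < b}. f i)"
    by (simp add: sum.inter_restrict)
  also have "{..<j} \<inter> {i. a \<le> i \<and> i < b} = {a..<j}" using assms by auto
  also have "(\<Sum>i\<in>{a..<j}. f i) = (\<Sum>i<j. f i) - (\<Sum>i<a. f i)"
  proof -
    have "{..<j} = {..<a} \<union> {a..<j}" using assms by auto
    then have "(\<Sum>i<j. f i) = (\<Sum>i<a. f i) + (\<Sum>i\<in>{a..<j}. f i)"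
      by (simp add: sum.union_disjoint ivl_disj_int)
    then show ?thesis by simp
  qed
  finally show ?thesis .
qed

lemma tail_choice:
  fixes a :: "nat \<Rightarrow> real"
  assumes "summable a" "\<And>i. 0 \<le> a i" "p > 0"
  obtains Nf where "\<And>k n. Nf k \<le> n \<Longrightarrow> (\<Sum>i. a (i + n)) powr (1/p) \<le> (1/8)^k"
proof -
  have T0: "(\<lambda>n. (\<Sum>i. a (i + n))) \<longlonglongrightarrow> 0" using suminf_exist_split2[OF assms(1)] .
  have "\<exists>M. \<forall>n\<ge>M. (\<Sum>i. a (i + n)) powr (1/p) \<le> (1/8)^k" for k
  proof -
    have pos: "((1/8::real)^k) powr p > 0" by simp
    have "eventually (\<lambda>n. (\<Sum>i. a (i + n)) < ((1/8::real)^k) powr p) sequentially"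
      using order_tendstoD(2)[OF T0 pos] .
    then obtain M where M: "\<And>n. n \<ge> M \<Longrightarrow> (\<Sum>i. a (i + n)) < ((1/8::real)^k) powr p"
      unfolding eventually_sequentially by blast
    have "(\<Sum>i. a (i + n)) powr (1/p) \<le> (1/8)^k" if "n \<ge> M" for n
    proof -
      have nn: "0 \<le> (\<Sum>i. a (i + n))"
        by (rule suminf_nonneg) (use assms summable_ignore_initial_segment in auto)
      have "(\<Sum>i. a (i + n)) powr (1/p) \<le> (((1/8::real)^k) powr p) powr (1/p)"
        using M[OF that] nn assms(3) by (intro powr_mono2) auto
      also have "\<dots> = (1/8)^k" using assms(3) by (simp add: powr_powr)
      finally show ?thesis .
    qed
    then show ?thesis by blast
  qed
  then have "\<forall>k. \<exists>M. \<forall>n\<ge>M. (\<Sum>i. a (i + n)) powr (1/p) \<le> (1/8)^k" by blast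
  from choice[OF this] obtain Nf where "\<forall>k. \<forall>n\<ge>Nf k. (\<Sum>i. a (i + n)) powr (1/p) \<le> (1/8)^k" ..
  then show ?thesis using that by blast
qed

lemma tail_block:
  fixes a :: "nat \<Rightarrow> real"
  assumes "summable a" "\<And>i. 0 \<le> a i"
  shows "(\<Sum>i<n. if m \<le> i \<and> i < n then a i else 0) \<le> (\<Sum>i. a (i + m))"
proof (cases "m \<le> n")
  case True
  have "(\<Sum>i<n. if m \<le> i \<and> i < n then a i else 0) = (\<Sum>i<n. a i) - (\<Sum>i<m. a i)"
    using sum_block[of m n n a] True by simp
  also have "\<dots> = (\<Sum>i\<in>{m..<n}. a i)"
  proof -
    have "{..<n} = {..<m} \<union> {m..<n}" using True by auto
    then have "(\<Sum>i<n. a i) = (\<Sum>i<m. a i) + (\<Sum>i\<in>{m..<n}. a i)"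
      by (simp add: sum.union_disjoint ivl_disj_int)
    then show ?thesis by simp
  qed
  also have "\<dots> = (\<Sum>i\<in>{0..<n-m}. a (i + m))"
    by (subst sum.atLeastLessThan_shift_0) (simp add: comp_def add.commute)
  also have "\<dots> \<le> (\<Sum>i. a (i + m))"
    by (rule sum_le_suminf) (use assms summable_ignore_initial_segment in auto)
  finally show ?thesis .
next
  case False
  then have "(\<Sum>i<n. if m \<le> i \<and> i < n then a i else 0) = 0" by (intro sum.neutral) auto
  moreover have "0 \<le> (\<Sum>i. a (i + m))"
    by (rule suminf_nonneg) (use assms summable_ignore_initial_segment in auto)
  ultimately show ?thesis by simp
qed

lemma sum_ivl_diff:
  fixes f :: "nat \<Rightarrow> 'a::ab_group_add"
  assumes "m \<le> n"
  shows "sum f {m..<n} = (\<Sum>i<n. f i) - (\<Sum>i<m. f i)"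
proof -
  have "{..<n} = {..<m} \<union> {m..<n}" using assms by auto
  then have "(\<Sum>i<n. f i) = (\<Sum>i<m. f i) + (\<Sum>i\<in>{m..<n}. f i)"
    by (simp add: sum.union_disjoint ivl_disj_int)
  then show ?thesis by simp
qed

lemma measure_le_of_emeasure:
  assumes "emeasure M A \<le> ennreal b" "0 \<le> b"
  shows "measure M A \<le> b"
proof -
  have "emeasure M A \<noteq> top" using assms(1) by (metis ennreal_neq_top top.extremum_uniqueI)
  then have "emeasure M A = ennreal (measure M A)" by (rule emeasure_eq_ennreal_measure)
  then show ?thesis using assms by simp
qed

lemma good_summable:
  fixes x :: "nat \<Rightarrow> 'a::banach" and N :: "nat \<Rightarrow> nat"
  assumes Nmono: "strict_mono N"
    and blk: "\<And>k j. k \<ge> K \<Longrightarrow> N k \<le> j \<Longrightarrow> j \<le> N (Suc k) \<Longrightarrow>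
       norm ((\<Sum>i<j. x i) - (\<Sum>i<N k. x i)) \<le> (1/2)^k"
  shows "summable x"
proof -
  define S where "S j = (\<Sum>i<j. x i)" for j
  have blk': "norm (S j - S (N k)) \<le> (1/2)^k" if "k \<ge> K" "N k \<le> j" "j \<le> N (Suc k)" for k j
    using blk[OF that] by (simp add: S_def)
  have tele: "norm (S (N (k0 + d)) - S (N k0)) \<le> 2*(1/2)^k0 - 2*(1/2)^(k0+d)" if "k0 \<ge> K" for k0 d
  proof (induction d)
    case 0
    then show ?case by simp
  next
    case (Suc d)
    have le: "N (k0 + d) \<le> N (Suc (k0 + d))" using Nmono by (simp add: strict_mono_less_eq)
    have a: "norm (S (N (Suc (k0 + d))) - S (N (k0 + d))) \<le> (1/2)^(k0+d)"
      using blk'[of "k0 + d" "N (Suc (k0 + d))"] le that by simp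
    have "norm (S (N (k0 + Suc d)) - S (N k0))
        \<le> norm (S (N (Suc (k0 + d))) - S (N (k0 + d))) + norm (S (N (k0 + d)) - S (N k0))"
      using norm_triangle_ineq[of "S (N (Suc (k0 + d))) - S (N (k0 + d))" "S (N (k0 + d)) - S (N k0)"]
      by simp
    also have "\<dots> \<le> (1/2)^(k0+d) + (2*(1/2)^k0 - 2*(1/2)^(k0+d))" using a Suc.IH by linarith
    also have "\<dots> = 2*(1/2)^k0 - 2*(1/2)^(k0 + Suc d)" by simp
    finally show ?case .
  qed
  have G: "norm (S j - S (N k0)) \<le> 2*(1/2)^k0" if G1: "k0 \<ge> K" and G2: "N k0 \<le> j" for k0 j
  proof -
    obtain k where k: "k \<ge> k0" "N k \<le> j" "j < N (Suc k)" using block_index[OF Nmono G2] by blast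
    have a: "norm (S j - S (N k)) \<le> (1/2)^k" using blk'[of k j] k G1 by simp
    have b: "norm (S (N k) - S (N k0)) \<le> 2*(1/2)^k0 - 2*(1/2)^k"
      using tele[OF G1, of "k - k0"] k by simp
    have "norm (S j - S (N k0)) \<le> norm (S j - S (N k)) + norm (S (N k) - S (N k0))"
      using norm_triangle_ineq[of "S j - S (N k)" "S (N k) - S (N k0)"] by simp
    also have "\<dots> \<le> 2*(1/2)^k0" using a b zero_le_power[of "1/2::real" k] by linarith
    finally show ?thesis .
  qed
  show ?thesis
    unfolding summable_Cauchy
  proof (intro allI impI)
    fix e :: real assume e: "e > 0"
    obtain k0 where k0: "(1/2::real)^k0 < e/4" using real_arch_pow_inv[of "e/4" "1/2"] e by auto
    define k1 where "k1 = max k0 K"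
    have k1: "(1/2::real)^k1 \<le> (1/2)^k0" unfolding k1_def by (intro power_decreasing) auto
    have "norm (sum x {m..<n}) < e" if "m \<ge> N k1" for m n
    proof (cases "m \<le> n")
      case True
      have "sum x {m..<n} = S n - S m" using sum_ivl_diff[OF True] by (simp add: S_def)
      also have "\<dots> = (S n - S (N k1)) - (S m - S (N k1))" by simp
      finally have "norm (sum x {m..<n}) \<le> norm (S n - S (N k1)) + norm (S m - S (N k1))"
        using norm_triangle_ineq4 by metis
      also have "\<dots> \<le> 2*(1/2)^k1 + 2*(1/2)^k1"
        using G[of k1 n] G[of k1 m] that True unfolding k1_def by (intro add_mono) auto
      also have "\<dots> < e" using k0 k1 by linarith
      finally show ?thesis .
    qed (use e in simp)
    then show "\<exists>M. \<forall>m\<ge>M. \<forall>n. norm (sum x {m..<n}) < e" by blast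
  qed
qed

lemma aux16: "(16::real)^k * 2^(k*2) = 8^(k*2)"
proof -
  have "(16::real)^k * 2^(k*2) = 16^k * 4^k" by (simp add: mult.commute[of k 2] power_mult)
  also have "\<dots> = 64^k" by (simp flip: power_mult_distrib)
  also have "\<dots> = 8^(k*2)" by (simp add: mult.commute[of k 2] power_mult)
  finally show ?thesis .
qed

lemma lp_Rad:
  fixes x :: "nat \<Rightarrow> 'a::banach"
  assumes p: "1 \<le> p" and ty: "has_type p TYPE('a)" and xs: "summable (\<lambda>i. norm (x i) powr p)"
  shows "x \<in> Rad"
proof -
  obtain C where C0: "C \<ge> 0" and C: "\<And>m n (w::nat \<Rightarrow> 'a). m \<le> n \<Longrightarrow>
     (\<Sum>e\<in>Om n. (norm (\<Sum>i<m. e i *\<^sub>R w i))\<^sup>2) / 2^n \<le> (C * (\<Sum>i<m. norm (w i) powr p) powr (1/p))\<^sup>2"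
    using type_disc[OF ty] by blast
  let ?a = "\<lambda>i. norm (x i) powr p"
  have a0: "\<And>i. 0 \<le> ?a i" by simp
  obtain Nf where Nf: "\<And>k n. Nf k \<le> n \<Longrightarrow> (\<Sum>i. ?a (i + n)) powr (1/p) \<le> (1/8)^k"
    using tail_choice[OF xs a0, of p] p by auto
  define N where "N k = k + (\<Sum>l\<le>k. Nf l)" for k
  have Nmono: "strict_mono N" unfolding strict_mono_Suc_iff N_def by simp
  have NNf: "Nf k \<le> N k" for k
    unfolding N_def using member_le_sum[of k "{..k}" Nf] by simp
  define w where "w k i = (if N k \<le> i \<and> i < N (Suc k) then x i else 0)" for k i
  define E where "E k = {0..1} \<inter> {t. \<exists>j\<le>N (Suc k). (1/2)^k < norm (\<Sum>i<j. rademacher i t *\<^sub>R w k i)}" for k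
  have Esets: "E k \<in> sets lborel" for k unfolding E_def sets_lborel by (rule rad_set_sets)
  have Ebound: "emeasure lborel (E k) \<le> ennreal (2 * C\<^sup>2 * (1/16)^k)" for k
  proof -
    have e1: "emeasure lborel (E k) \<le> ennreal (2 * (C * (\<Sum>i<N (Suc k). norm (w k i) powr p) powr (1/p))\<^sup>2 / ((1/2)^k)\<^sup>2)"
      unfolding E_def by (rule block_measure[OF _ C]) simp
    have "(\<Sum>i<N (Suc k). norm (w k i) powr p) = (\<Sum>i<N (Suc k). if N k \<le> i \<and> i < N (Suc k) then ?a i else 0)"
      unfolding w_def by (intro sum.cong) auto
    also have "\<dots> \<le> (\<Sum>i. ?a (i + N k))" by (rule tail_block[OF xs a0])
    finally have "(\<Sum>i<N (Suc k). norm (w k i) powr p) powr (1/p) \<le> (\<Sum>i. ?a (i + N k)) powr (1/p)"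
      using p by (intro powr_mono2) (auto intro: sum_nonneg)
    also have "\<dots> \<le> (1/8)^k" by (rule Nf[OF NNf])
    finally have "C * (\<Sum>i<N (Suc k). norm (w k i) powr p) powr (1/p) \<le> C * (1/8)^k"
      using C0 by (intro mult_left_mono) auto
    then have "(C * (\<Sum>i<N (Suc k). norm (w k i) powr p) powr (1/p))\<^sup>2 \<le> (C * (1/8)^k)\<^sup>2"
      using C0 by (intro power_mono) auto
    then have "2 * (C * (\<Sum>i<N (Suc k). norm (w k i) powr p) powr (1/p))\<^sup>2 / ((1/2)^k)\<^sup>2
        \<le> 2 * (C * (1/8)^k)\<^sup>2 / ((1/2)^k)\<^sup>2"
      by (intro divide_right_mono mult_left_mono) auto
    also have "2 * (C * (1/8)^k)\<^sup>2 / ((1/2::real)^k)\<^sup>2 = 2 * C\<^sup>2 * (1/16)^k"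
      using aux16[of k] by (simp add: power_mult_distrib power_divide field_simps flip: power_mult)
    finally show ?thesis using e1 by (meson ennreal_leI order_trans)
  qed
  have Efin: "emeasure lborel (E k) < \<infinity>" for k
    using Ebound[of k] by (metis ennreal_less_top infinity_ennreal_def order.strict_trans1)
  have Esum: "summable (\<lambda>k. measure lborel (E k))"
  proof (rule summable_comparison_test)
    show "\<exists>M. \<forall>k\<ge>M. norm (measure lborel (E k)) \<le> 2 * C\<^sup>2 * (1/16)^k"
    proof (intro exI[of _ 0] allI impI)
      fix k :: nat
      have "measure lborel (E k) \<le> 2 * C\<^sup>2 * (1/16)^k" by (rule measure_le_of_emeasure[OF Ebound]) simp
      then show "norm (measure lborel (E k)) \<le> 2 * C\<^sup>2 * (1/16)^k"
        by (simp only: real_norm_def abs_of_nonneg[OF measure_nonneg])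
    qed
    show "summable (\<lambda>k. 2 * C\<^sup>2 * (1/16::real)^k)"
      by (intro summable_mult summable_geometric) auto
  qed
  have BC: "AE t in lborel. eventually (\<lambda>k. t \<in> space lborel - E k) sequentially"
    by (rule borel_cantelli_AE1[OF Esets Efin Esum])
  have good: "summable (\<lambda>i. rademacher i t *\<^sub>R x i)"
    if t01: "t \<in> {0..1}" and ev: "eventually (\<lambda>k. t \<in> space lborel - E k) sequentially" for t
  proof -
    obtain K where K: "\<And>k. k \<ge> K \<Longrightarrow> t \<notin> E k"
      using ev unfolding eventually_sequentially by auto
    show ?thesis
    proof (rule good_summable[OF Nmono])
      fix k j assume kj: "K \<le> k" "N k \<le> j" "j \<le> N (Suc k)"
      have "\<not> (1/2)^k < norm (\<Sum>i<j. rademacher i t *\<^sub>R w k i)"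
        using K[OF kj(1)] t01 kj(3) unfolding E_def by auto
      moreover have "(\<Sum>i<j. rademacher i t *\<^sub>R w k i)
          = (\<Sum>i<j. if N k \<le> i \<and> i < N (Suc k) then rademacher i t *\<^sub>R x i else 0)"
        unfolding w_def by (intro sum.cong) auto
      moreover have "\<dots> = (\<Sum>i<j. rademacher i t *\<^sub>R x i) - (\<Sum>i<N k. rademacher i t *\<^sub>R x i)"
        by (rule sum_block[OF kj(2,3)])
      ultimately show "norm ((\<Sum>i<j. rademacher i t *\<^sub>R x i) - (\<Sum>i<N k. rademacher i t *\<^sub>R x i)) \<le> (1/2)^k"
        by simp
    qed
  qed
  have AEs: "AE t in lborel. t \<in> {0..1} \<longrightarrow> summable (\<lambda>i. rademacher i t *\<^sub>R x i)"
    using BC by eventually_elim (use good in blast)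
  define S where "S t m = (\<Sum>i<m. rademacher i t *\<^sub>R x i)" for t m
  define T0 where "T0 = (\<Sum>i. ?a i)"
  define B where "B = (C * T0 powr (1/p))\<^sup>2"
  have SRR: "S t m = (\<Sum>i<m. RR m t i *\<^sub>R x i)" for t m
    unfolding S_def by (simp add: sum_RR)
  have Sm_int: "(\<integral>\<^sup>+ t\<in>{0..1}. ennreal ((norm (S t m))\<^sup>2) \<partial>lborel) \<le> ennreal B" for m
  proof -
    have "(\<integral>\<^sup>+ t\<in>{0..1}. ennreal ((norm (S t m))\<^sup>2) \<partial>lborel)
       = (\<integral>\<^sup>+ t\<in>{0..1}. ennreal ((\<lambda>e. (norm (\<Sum>i<m. e i *\<^sub>R x i))\<^sup>2) (RR m t)) \<partial>lborel)"
      by (simp only: SRR)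
    also have "\<dots> = ennreal ((\<Sum>e\<in>Om m. (norm (\<Sum>i<m. e i *\<^sub>R x i))\<^sup>2) / 2^m)"
      by (rule disc_nn) simp
    also have "\<dots> \<le> ennreal ((C * (\<Sum>i<m. ?a i) powr (1/p))\<^sup>2)"
      by (rule ennreal_leI) (rule C, simp)
    also have "\<dots> \<le> ennreal B"
    proof (rule ennreal_leI)
      have "(\<Sum>i<m. ?a i) \<le> T0" unfolding T0_def by (rule sum_le_suminf[OF xs]) auto
      then have "(\<Sum>i<m. ?a i) powr (1/p) \<le> T0 powr (1/p)"
        using p by (intro powr_mono2) (auto intro: sum_nonneg)
      then have "C * (\<Sum>i<m. ?a i) powr (1/p) \<le> C * T0 powr (1/p)"
        using C0 by (intro mult_left_mono) auto
      then show "(C * (\<Sum>i<m. ?a i) powr (1/p))\<^sup>2 \<le> B"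
        unfolding B_def using C0 by (intro power_mono) auto
    qed
    finally show ?thesis .
  qed
  have measS: "(\<lambda>t. ennreal ((norm (S t m))\<^sup>2) * indicator {0..1} t) \<in> borel_measurable lborel" for m
  proof -
    have "(\<lambda>t. (\<lambda>e. (norm (\<Sum>i<m. e i *\<^sub>R x i))\<^sup>2) (RR m t)) \<in> borel_measurable borel"
      by (rule RR_meas)
    then have [measurable]: "(\<lambda>t. (norm (S t m))\<^sup>2) \<in> borel_measurable borel"
      by (simp only: SRR)
    show ?thesis by measurable
  qed
  have lim: "AE t in lborel. ennreal ((norm (\<Sum>i. rademacher i t *\<^sub>R x i))\<^sup>2) * indicator {0..1} t
      = liminf (\<lambda>m. ennreal ((norm (S t m))\<^sup>2) * indicator {0..1} t)"
    using AEs
  proof eventually_elim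
    case (elim t)
    show ?case
    proof (cases "t \<in> {0..1}")
      case True
      then have sm: "summable (\<lambda>i. rademacher i t *\<^sub>R x i)" using elim by simp
      have "(\<lambda>m. S t m) \<longlonglongrightarrow> (\<Sum>i. rademacher i t *\<^sub>R x i)"
        unfolding S_def by (rule summable_LIMSEQ[OF sm])
      then have "(\<lambda>m. ennreal ((norm (S t m))\<^sup>2)) \<longlonglongrightarrow> ennreal ((norm (\<Sum>i. rademacher i t *\<^sub>R x i))\<^sup>2)"
        by (intro tendsto_ennrealI tendsto_power tendsto_norm)
      then have "liminf (\<lambda>m. ennreal ((norm (S t m))\<^sup>2)) = ennreal ((norm (\<Sum>i. rademacher i t *\<^sub>R x i))\<^sup>2)"
        by (rule lim_imp_Liminf[rotated]) simp
      then show ?thesis using True by simp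
    next
      case False
      then show ?thesis by (simp add: Liminf_const)
    qed
  qed
  have "(\<integral>\<^sup>+ t\<in>{0..1}. ennreal ((norm (\<Sum>i. rademacher i t *\<^sub>R x i))\<^sup>2) \<partial>lborel)
      = (\<integral>\<^sup>+ t. liminf (\<lambda>m. ennreal ((norm (S t m))\<^sup>2) * indicator {0..1} t) \<partial>lborel)"
    by (rule nn_integral_cong_AE[OF lim])
  also have "\<dots> \<le> liminf (\<lambda>m. (\<integral>\<^sup>+ t. ennreal ((norm (S t m))\<^sup>2) * indicator {0..1} t \<partial>lborel))"
    by (rule nn_integral_liminf[OF measS])
  also have "\<dots> \<le> ennreal B"
    by (rule Liminf_le) (use Sm_int in auto)
  also have "\<dots> < \<infinity>" by simp
  finally show ?thesis unfolding Rad_def using AEs by simp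
qed

lemma tangent_ineq:
  fixes p x y :: real
  assumes p: "p > 1" and x: "0 < x" and xy: "x \<le> y"
  shows "(y - x) / y powr p \<le> (x powr (1-p) - y powr (1-p)) / (p - 1)"
proof (cases "x = y")
  case True then show ?thesis by simp
next
  case False
  then have lt: "x < y" using xy by simp
  have "\<exists>z. x < z \<and> z < y \<and> (y powr (1-p) - x powr (1-p) = (y - x) * ((1-p) * z powr (1-p-1)))"
    apply (rule MVT2[OF lt])
    apply (rule has_real_derivative_powr)
    using x by auto
  then obtain z where z: "x < z" "z < y" "y powr (1-p) - x powr (1-p) = (y - x) * ((1-p) * z powr (1-p-1))"
    by blast
  have "(x powr (1-p) - y powr (1-p)) / (p - 1) = (y - x) * z powr (-p)"
    using z(3) p by (simp add: field_simps)
  also have "z powr (-p) \<ge> y powr (-p)" using z x p by (intro powr_mono2') auto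
  then have "(y - x) * z powr (-p) \<ge> (y - x) * y powr (-p)" using lt by (intro mult_left_mono) auto
  finally show ?thesis by (simp add: powr_minus_divide)
qed

lemma landau:
  fixes b :: "nat \<Rightarrow> real" and p :: real
  assumes p1: "p > 1" and b0: "\<And>i. 0 \<le> b i"
    and H: "\<And>a. (\<And>i. 0 \<le> a i) \<Longrightarrow> summable (\<lambda>i. a i powr p) \<Longrightarrow> summable (\<lambda>i. a i * b i)"
  shows "summable (\<lambda>i. b i powr (p/(p-1)))"
proof (rule ccontr)
  define q where "q = p/(p-1)"
  assume "\<not> summable (\<lambda>i. b i powr (p/(p-1)))"
  then have ns: "\<not> summable (\<lambda>i. b i powr q)" by (simp add: q_def)
  define c where "c i = b i powr q" for i
  have c0: "0 \<le> c i" for i by (simp add: c_def)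
  define P where "P n = (\<Sum>i<n. c i)" for n
  have Pmono: "P m \<le> P n" if "m \<le> n" for m n
    unfolding P_def using that c0 by (intro sum_mono2) auto
  have PSuc: "P (Suc i) = P i + c i" for i by (simp add: P_def)
  have Punb: "\<exists>n. Z < P n" for Z
  proof (rule ccontr)
    assume "\<not> (\<exists>n. Z < P n)"
    then have "\<And>n. (\<Sum>i<n. c i) \<le> Z" by (auto simp: P_def not_less)
    then have "summable c" by (intro summableI_nonneg_bounded[OF c0]) auto
    moreover have "c = (\<lambda>i. b i powr q)" by (simp add: fun_eq_iff c_def)
    ultimately show False using ns by simp
  qed
  have Ptop: "filterlim P at_top sequentially"
    unfolding filterlim_at_top
  proof
    fix Z
    obtain n where "Z < P n" using Punb by blast
    then show "eventually (\<lambda>m. Z \<le> P m) sequentially"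
      unfolding eventually_sequentially using Pmono by (meson less_imp_le order_trans)
  qed
  obtain m0 where m0: "0 < P m0" using Punb by blast
  have Ppos: "0 < P i" if "m0 \<le> i" for i using Pmono[OF that] m0 by simp
  define a where "a i = (if P (Suc i) > 0 then b i powr (q - 1) / P (Suc i) else 0)" for i
  have a0: "0 \<le> a i" for i unfolding a_def by simp
  have q1: "(q - 1) * p = q" using p1 unfolding q_def by (simp add: field_simps)
  have ap: "a i powr p = c i / P (Suc i) powr p" if "P (Suc i) > 0" for i
  proof -
    have "a i powr p = (b i powr (q - 1)) powr p / P (Suc i) powr p"
      unfolding a_def using that b0 by (simp add: powr_divide)
    also have "(b i powr (q - 1)) powr p = c i" unfolding c_def by (simp add: powr_powr q1)
    finally show ?thesis .
  qed
  have ab: "a i * b i = c i / P (Suc i)" if "P (Suc i) > 0" for i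
  proof (cases "b i = 0")
    case True then show ?thesis by (simp add: a_def c_def)
  next
    case False
    then have bp: "b i > 0" using b0 less_eq_real_def by auto
    have e1: "b i powr 1 = b i" using bp by simp
    have "b i powr (q - 1) * b i powr 1 = b i powr (q - 1 + 1)" by (rule powr_add[symmetric])
    then have "b i powr (q - 1) * b i = b i powr q" using e1 by simp
    then show ?thesis unfolding a_def c_def using that by simp
  qed
  have sumap: "summable (\<lambda>i. a i powr p)"
  proof (rule summable_comparison_test')
    have "((\<lambda>n. P n powr (1 - p)) \<longlongrightarrow> 0) sequentially"
      by (rule tendsto_neg_powr[OF _ Ptop]) (use p1 in simp)
    then show "summable (\<lambda>n. (P n powr (1-p) - P (Suc n) powr (1-p)) / (p - 1))"
      by (intro summable_divide telescope_summable')
    fix n assume n: "m0 \<le> n"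
    have pos: "P (Suc n) > 0" using Ppos[of "Suc n"] n by simp
    have "norm (a n powr p) = c n / P (Suc n) powr p" using ap[OF pos] c0 by simp
    also have "\<dots> = (P (Suc n) - P n) / P (Suc n) powr p" by (simp add: PSuc)
    also have "\<dots> \<le> (P n powr (1-p) - P (Suc n) powr (1-p)) / (p - 1)"
      by (rule tangent_ineq[OF p1 Ppos[OF n]]) (simp add: PSuc c0)
    finally show "norm (a n powr p) \<le> (P n powr (1-p) - P (Suc n) powr (1-p)) / (p - 1)" .
  qed
  have sab: "summable (\<lambda>i. a i * b i)" by (rule H[OF a0 sumap])
  then obtain M where M: "\<And>m n. m \<ge> M \<Longrightarrow> norm (sum (\<lambda>i. a i * b i) {m..<n}) < 1/2"
    unfolding summable_Cauchy by (metis half_gt_zero_iff zero_less_one)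
  define m where "m = max M m0"
  have Pm: "0 < P m" using Ppos m_def by simp
  obtain n where n: "2 * P m < P n" using Punb by blast
  have mn: "m \<le> n"
  proof (rule ccontr)
    assume "\<not> m \<le> n"
    then have "P n \<le> P m" using Pmono by simp
    then show False using n Pm by simp
  qed
  have "(\<Sum>i\<in>{m..<n}. c i / P n) \<le> (\<Sum>i\<in>{m..<n}. a i * b i)"
  proof (rule sum_mono)
    fix i assume i: "i \<in> {m..<n}"
    have pos: "P (Suc i) > 0" using Ppos[of "Suc i"] i m_def by simp
    have "P (Suc i) \<le> P n" using i by (intro Pmono) auto
    then have "c i / P n \<le> c i / P (Suc i)" using pos c0 by (intro divide_left_mono) auto
    then show "c i / P n \<le> a i * b i" using ab[OF pos] by simp
  qed
  also have "\<dots> < 1/2" using M[of m n] m_def by simp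
  finally have lt: "(\<Sum>i\<in>{m..<n}. c i) / P n < 1/2" by (simp add: sum_divide_distrib)
  have "(\<Sum>i\<in>{m..<n}. c i) = P n - P m" unfolding P_def by (rule sum_ivl_diff[OF mn])
  then have "(P n - P m) / P n < 1/2" using lt by simp
  moreover have "P n > 0" using n Pm by simp
  ultimately show False using n by (simp add: field_simps)
qed

lemma ev_fun:
  fixes y :: "'b::real_normed_vector"
  obtains \<phi> :: "('b \<Rightarrow>\<^sub>L real) \<Rightarrow>\<^sub>L real" where "\<And>f. blinfun_apply \<phi> f = blinfun_apply f y" "norm \<phi> \<le> norm y"
proof -
  define \<phi> where "\<phi> = Blinfun (\<lambda>f::'b \<Rightarrow>\<^sub>L real. blinfun_apply f y)"
  have ap: "blinfun_apply \<phi> f = blinfun_apply f y" for f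
    unfolding \<phi>_def by (subst bounded_linear_Blinfun_apply) auto
  have "norm \<phi> \<le> norm y"
  proof (rule norm_blinfun_bound)
    fix f :: "'b \<Rightarrow>\<^sub>L real"
    show "norm (blinfun_apply \<phi> f) \<le> norm y * norm f"
      using norm_blinfun[of f y] by (simp add: ap mult.commute)
  qed simp
  then show ?thesis using that ap by blast
qed

definition good_exp :: "ereal \<Rightarrow> bool" where
  "good_exp s = (s = \<infinity> \<or> (\<exists>r. s = ereal r \<and> r > 0))"

lemma lp_upper:
  assumes "good_exp s" "lp_in s a"
  shows "\<bar>a i\<bar> \<le> lp_norm s a"
proof (cases "s = \<infinity>")
  case True
  then have "bounded (range a)" using assms(2) by (simp add: lp_in_def)
  then have "bdd_above (range (\<lambda>i. \<bar>a i\<bar>))"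
    by (auto simp: bounded_iff bdd_above_def)
  then show ?thesis using True cSUP_upper[of i UNIV "\<lambda>i. \<bar>a i\<bar>"] by (simp add: lp_norm_def)
next
  case False
  then obtain r where r: "s = ereal r" "r > 0" using assms(1) by (auto simp: good_exp_def)
  have sm: "summable (\<lambda>i. \<bar>a i\<bar> powr r)" using assms(2) r by (simp add: lp_in_def)
  have "\<bar>a i\<bar> powr r \<le> (\<Sum>i. \<bar>a i\<bar> powr r)"
    using sum_le_suminf[OF sm, of "{i}"] by simp
  then have "(\<bar>a i\<bar> powr r) powr (1/r) \<le> (\<Sum>i. \<bar>a i\<bar> powr r) powr (1/r)"
    using r by (intro powr_mono2) auto
  moreover have "(\<bar>a i\<bar> powr r) powr (1/r) = \<bar>a i\<bar>" using r by (simp add: powr_powr)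
  ultimately show ?thesis using r by (simp add: lp_norm_def)
qed

lemma lp_norm_zero: "good_exp s \<Longrightarrow> lp_norm s (\<lambda>i. 0) = 0"
  by (auto simp: lp_norm_def good_exp_def)

lemma weak_upper:
  assumes "weak_lp s x" "norm \<phi> \<le> 1"
  shows "lp_norm s (\<lambda>i. blinfun_apply \<phi> (x i)) \<le> weak_lp_norm s x"
  unfolding weak_lp_norm_def
  by (rule cSup_upper) (use assms in \<open>auto simp: weak_lp_def\<close>)

lemma weak_nonneg:
  assumes "weak_lp s x" "good_exp s"
  shows "0 \<le> weak_lp_norm s x"
  using weak_upper[OF assms(1), of 0] lp_norm_zero[OF assms(2)] by simp

lemma norm_le_weak:
  fixes ys :: "nat \<Rightarrow> ('b::real_normed_vector \<Rightarrow>\<^sub>L real)"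
  assumes w: "weak_lp s ys" and g: "good_exp s"
  shows "norm (ys i) \<le> weak_lp_norm s ys"
proof (rule norm_blinfun_bound)
  show "0 \<le> weak_lp_norm s ys" by (rule weak_nonneg[OF w g])
  fix y :: 'b
  show "norm (blinfun_apply (ys i) y) \<le> weak_lp_norm s ys * norm y"
  proof (cases "y = 0")
    case True then show ?thesis by simp
  next
    case False
    define y' where "y' = y /\<^sub>R norm y"
    have ny': "norm y' = 1" using False by (simp add: y'_def)
    obtain \<phi> :: "('b \<Rightarrow>\<^sub>L real) \<Rightarrow>\<^sub>L real" where \<phi>: "\<And>f. blinfun_apply \<phi> f = blinfun_apply f y'" "norm \<phi> \<le> norm y'"
      using ev_fun[of y'] by blast
    have lin: "lp_in s (\<lambda>j. blinfun_apply \<phi> (ys j))" using w by (simp add: weak_lp_def)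
    have "\<bar>blinfun_apply (ys i) y'\<bar> \<le> lp_norm s (\<lambda>j. blinfun_apply \<phi> (ys j))"
      using lp_upper[OF g lin, of i] \<phi>(1) by simp
    also have "\<dots> \<le> weak_lp_norm s ys" by (rule weak_upper[OF w]) (use \<phi>(2) ny' in simp)
    finally have a: "\<bar>blinfun_apply (ys i) y'\<bar> \<le> weak_lp_norm s ys" .
    have "blinfun_apply (ys i) y = norm y * blinfun_apply (ys i) y'"
      using False by (simp add: y'_def blinfun.scaleR_right)
    then have "norm (blinfun_apply (ys i) y) = norm y * \<bar>blinfun_apply (ys i) y'\<bar>" by (simp add: abs_mult)
    also have "\<dots> \<le> norm y * weak_lp_norm s ys" using a by (intro mult_left_mono) auto
    finally show ?thesis by (simp add: mult.commute)
  qed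
qed

lemma attain:
  fixes f :: "'a::real_normed_vector \<Rightarrow>\<^sub>L real"
  obtains v where "norm v \<le> 1" "norm f / 2 \<le> blinfun_apply f v"
proof (cases "\<exists>v. norm v \<le> 1 \<and> norm f / 2 \<le> blinfun_apply f v")
  case True then show ?thesis using that by blast
next
  case False
  then have F: "\<And>v. norm v \<le> 1 \<Longrightarrow> blinfun_apply f v < norm f / 2" by (meson not_le)
  have "norm f \<le> norm f / 2"
  proof (rule norm_blinfun_bound)
    show "0 \<le> norm f / 2" by simp
    fix x :: 'a
    show "norm (blinfun_apply f x) \<le> norm f / 2 * norm x"
    proof (cases "x = 0")
      case True then show ?thesis by simp
    next
      case False
      define v where "v = x /\<^sub>R norm x"
      have nv: "norm v \<le> 1" "norm (-v) \<le> 1" using False by (auto simp: v_def)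
      have "blinfun_apply f v < norm f / 2" "blinfun_apply f (-v) < norm f / 2" using F nv by auto
      then have "\<bar>blinfun_apply f v\<bar> \<le> norm f / 2" by (simp add: blinfun.minus_right)
      moreover have "blinfun_apply f x = norm x * blinfun_apply f v"
        using False by (simp add: v_def blinfun.scaleR_right)
      ultimately have "norm (blinfun_apply f x) = norm x * \<bar>blinfun_apply f v\<bar>" by (simp add: abs_mult)
      also have "\<dots> \<le> norm x * (norm f / 2)" using \<open>\<bar>blinfun_apply f v\<bar> \<le> norm f / 2\<close> by (intro mult_left_mono) auto
      finally show ?thesis by (simp add: mult.commute)
    qed
  qed
  then have "norm f = 0" by simp
  then show ?thesis using that[of 0] by simp
qed

lemma lp_scale:
  assumes "lp_in (ereal r) a" "r > 0" "c > 0"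
  shows "lp_in (ereal r) (\<lambda>i. c * a i) \<and> lp_norm (ereal r) (\<lambda>i. c * a i) = c * lp_norm (ereal r) a"
proof -
  have sm: "summable (\<lambda>i. \<bar>a i\<bar> powr r)" using assms(1) by (simp add: lp_in_def)
  have eq: "\<bar>c * a i\<bar> powr r = c powr r * \<bar>a i\<bar> powr r" for i
    using assms(3) by (simp add: abs_mult powr_mult)
  have sm2: "summable (\<lambda>i. \<bar>c * a i\<bar> powr r)" unfolding eq by (rule summable_mult[OF sm])
  have "(\<Sum>i. \<bar>c * a i\<bar> powr r) = c powr r * (\<Sum>i. \<bar>a i\<bar> powr r)"
    unfolding eq by (rule suminf_mult[OF sm])
  moreover have "0 \<le> (\<Sum>i. \<bar>a i\<bar> powr r)" by (rule suminf_nonneg[OF sm]) simp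
  ultimately have "(\<Sum>i. \<bar>c * a i\<bar> powr r) powr (1/r) = c * (\<Sum>i. \<bar>a i\<bar> powr r) powr (1/r)"
    using assms(2,3) by (simp add: powr_mult powr_powr)
  then show ?thesis using sm2 by (simp add: lp_in_def lp_norm_def)
qed

lemma weak_scale:
  fixes ys :: "nat \<Rightarrow> 'e::real_normed_vector"
  assumes w: "weak_lp (ereal r) ys" and r: "r > 0" and c: "c > 0"
  shows "weak_lp (ereal r) (\<lambda>i. c *\<^sub>R ys i) \<and> weak_lp_norm (ereal r) (\<lambda>i. c *\<^sub>R ys i) \<le> c * weak_lp_norm (ereal r) ys"
proof -
  have lin: "lp_in (ereal r) (\<lambda>i. blinfun_apply \<phi> (ys i))" for \<phi> :: "'e \<Rightarrow>\<^sub>L real"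
    using w by (simp add: weak_lp_def)
  have ap: "blinfun_apply \<phi> (c *\<^sub>R ys i) = c * blinfun_apply \<phi> (ys i)" for \<phi> :: "'e \<Rightarrow>\<^sub>L real" and i
    by (simp add: blinfun.scaleR_right)
  have L: "lp_in (ereal r) (\<lambda>i. blinfun_apply \<phi> (c *\<^sub>R ys i))
      \<and> lp_norm (ereal r) (\<lambda>i. blinfun_apply \<phi> (c *\<^sub>R ys i)) = c * lp_norm (ereal r) (\<lambda>i. blinfun_apply \<phi> (ys i))"
    for \<phi> :: "'e \<Rightarrow>\<^sub>L real"
    unfolding ap by (rule lp_scale[OF lin r c])
  have le: "lp_norm (ereal r) (\<lambda>i. blinfun_apply \<phi> (c *\<^sub>R ys i)) \<le> c * weak_lp_norm (ereal r) ys"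
    if "norm \<phi> \<le> 1" for \<phi> :: "'e \<Rightarrow>\<^sub>L real"
    using L[of \<phi>] weak_upper[OF w that] c by (simp add: mult_left_mono)
  define S where "S = {lp_norm (ereal r) (\<lambda>i. blinfun_apply \<phi> (c *\<^sub>R ys i)) | \<phi>::'e \<Rightarrow>\<^sub>L real. norm \<phi> \<le> 1}"
  have Sle: "v \<le> c * weak_lp_norm (ereal r) ys" if "v \<in> S" for v
  proof -
    from that obtain \<phi> :: "'e \<Rightarrow>\<^sub>L real" where "v = lp_norm (ereal r) (\<lambda>i. blinfun_apply \<phi> (c *\<^sub>R ys i))" "norm \<phi> \<le> 1"
      unfolding S_def by blast
    then show ?thesis using le by simp
  qed
  have bdd: "bdd_above S" unfolding bdd_above_def using Sle by blast
  have w2: "weak_lp (ereal r) (\<lambda>i. c *\<^sub>R ys i)" unfolding weak_lp_def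
  proof
    show "\<forall>\<phi>::'e \<Rightarrow>\<^sub>L real. lp_in (ereal r) (\<lambda>i. blinfun_apply \<phi> (c *\<^sub>R ys i))" using L by simp
    show "bdd_above {lp_norm (ereal r) (\<lambda>i. blinfun_apply \<phi> (c *\<^sub>R ys i)) | \<phi>::'e \<Rightarrow>\<^sub>L real. norm \<phi> \<le> 1}"
      using bdd unfolding S_def .
  qed
  have ne: "S \<noteq> {}" unfolding S_def by (auto intro: exI[of _ 0])
  have "weak_lp_norm (ereal r) (\<lambda>i. c *\<^sub>R ys i) = Sup S" by (simp add: weak_lp_norm_def S_def)
  also have "\<dots> \<le> c * weak_lp_norm (ereal r) ys" by (rule cSup_least[OF ne Sle])
  finally show ?thesis using w2 by simp
qed

theorem theorem2p4:
  fixes p :: real and u :: "'a::banach \<Rightarrow>\<^sub>L 'b::banach"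
  assumes "1 \<le> p" and "p \<le> 2"
    and "has_type p TYPE('a)"
    and "\<forall>x \<in> (Rad :: (nat \<Rightarrow> 'a) set). cohen_lp p (\<lambda>i. blinfun_apply u (x i))"
  shows "abs_summing (conj_exp p) (adjoint_op u) \<and> cohen_strongly_summing p (blinfun_apply u)"
proof -
  have cs: "cohen_strongly_summing p (blinfun_apply u)"
    unfolding cohen_strongly_summing_def
  proof (intro allI impI)
    fix x :: "nat \<Rightarrow> 'a" assume "strong_lp (ereal p) x"
    then have "summable (\<lambda>i. norm (x i) powr p)" by (simp add: strong_lp_def lp_in_def)
    then have "x \<in> Rad" by (rule lp_Rad[OF assms(1) assms(3)])
    then show "cohen_lp p (\<lambda>i. blinfun_apply u (x i))" using assms(4) by blast
  qed
  have as: "abs_summing (conj_exp p) (adjoint_op u)"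
  proof (cases "p = 1")
    case True
    then have ce: "conj_exp p = \<infinity>" by (simp add: conj_exp_def)
    have g: "good_exp \<infinity>" by (simp add: good_exp_def)
    show ?thesis unfolding abs_summing_def ce
    proof (intro allI impI)
      fix ys :: "nat \<Rightarrow> ('b \<Rightarrow>\<^sub>L real)" assume w: "weak_lp \<infinity> ys"
      have "norm (adjoint_op u (ys i)) \<le> weak_lp_norm \<infinity> ys * norm u" for i
      proof -
        have "norm (adjoint_op u (ys i)) \<le> norm (ys i) * norm u"
          unfolding adjoint_op_def by (rule norm_blinfun_compose)
        also have "\<dots> \<le> weak_lp_norm \<infinity> ys * norm u"
          by (rule mult_right_mono[OF norm_le_weak[OF w g]]) simp
        finally show ?thesis .
      qed
      then have "bounded (range (\<lambda>i. norm (adjoint_op u (ys i))))"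
        unfolding bounded_iff by auto
      then show "strong_lp \<infinity> (\<lambda>i. adjoint_op u (ys i))" by (simp add: strong_lp_def lp_in_def)
    qed
  next
    case False
    then have p1: "p > 1" using assms(1) by simp
    define q where "q = p / (p - 1)"
    have q0: "q > 0" using p1 by (simp add: q_def)
    have ce: "conj_exp p = ereal q" using False by (simp add: conj_exp_def q_def)
    have g: "good_exp (ereal q)" using q0 by (auto simp: good_exp_def)
    show ?thesis unfolding abs_summing_def ce
    proof (intro allI impI)
      fix ys :: "nat \<Rightarrow> ('b \<Rightarrow>\<^sub>L real)" assume w: "weak_lp (ereal q) ys"
      define W where "W = weak_lp_norm (ereal q) ys"
      have W0: "0 \<le> W" unfolding W_def by (rule weak_nonneg[OF w g])
      define c where "c = 1 / (W + 1)"
      have c0: "c > 0" using W0 by (simp add: c_def)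
      have cW: "c * W \<le> 1" using W0 by (simp add: c_def field_simps)
      define ys' where "ys' i = c *\<^sub>R ys i" for i
      have w': "weak_lp (ereal q) ys'" "weak_lp_norm (ereal q) ys' \<le> 1"
        using weak_scale[OF w q0 c0] cW unfolding ys'_def W_def by auto
      define b where "b i = norm (ys i o\<^sub>L u)" for i
      have b0: "\<And>i. 0 \<le> b i" by (simp add: b_def)
      have H: "summable (\<lambda>i. a i * b i)" if a0: "\<And>i. 0 \<le> a i" and sa: "summable (\<lambda>i. a i powr p)" for a
      proof -
        have "\<forall>i. \<exists>v. norm v \<le> 1 \<and> norm (ys i o\<^sub>L u) / 2 \<le> blinfun_apply (ys i o\<^sub>L u) v"
          using attain by metis
        then obtain xv where xv: "\<And>i. norm (xv i) \<le> 1" "\<And>i. b i / 2 \<le> blinfun_apply (ys i) (blinfun_apply u (xv i))"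
          unfolding b_def by (metis blinfun_apply_blinfun_compose)
        define z where "z i = a i *\<^sub>R xv i" for i
        have "summable (\<lambda>i. norm (z i) powr p)"
        proof (rule summable_comparison_test[OF _ sa])
          show "\<exists>N. \<forall>n\<ge>N. norm (norm (z n) powr p) \<le> a n powr p"
          proof (intro exI[of _ 0] allI impI)
            fix n :: nat
            have "norm (z n) \<le> a n" using xv(1)[of n] a0[of n]
              by (simp add: z_def mult_left_le)
            then show "norm (norm (z n) powr p) \<le> a n powr p"
              using assms(1) by (simp add: powr_mono2)
          qed
        qed
        then have "z \<in> Rad" by (rule lp_Rad[OF assms(1) assms(3)])
        then have "cohen_lp p (\<lambda>i. blinfun_apply u (z i))" using assms(4) by blast
        then have "summable (\<lambda>i. \<bar>blinfun_apply (ys' i) (blinfun_apply u (z i))\<bar>)"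
          unfolding cohen_lp_def using w' ce by simp
        moreover have "\<bar>blinfun_apply (ys' i) (blinfun_apply u (z i))\<bar> = c * a i * \<bar>blinfun_apply (ys i) (blinfun_apply u (xv i))\<bar>" for i
          using c0 a0[of i] by (simp add: ys'_def z_def blinfun.scaleR_right blinfun.scaleR_left abs_mult)
        ultimately have s1: "summable (\<lambda>i. c * a i * \<bar>blinfun_apply (ys i) (blinfun_apply u (xv i))\<bar>)" by simp
        have "summable (\<lambda>i. c * a i * (b i / 2))"
        proof (rule summable_comparison_test[OF _ s1])
          show "\<exists>N. \<forall>n\<ge>N. norm (c * a n * (b n / 2)) \<le> c * a n * \<bar>blinfun_apply (ys n) (blinfun_apply u (xv n))\<bar>"
          proof (intro exI[of _ 0] allI impI)
            fix n :: nat
            have "b n / 2 \<le> \<bar>blinfun_apply (ys n) (blinfun_apply u (xv n))\<bar>" using xv(2)[of n] by linarith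
            then show "norm (c * a n * (b n / 2)) \<le> c * a n * \<bar>blinfun_apply (ys n) (blinfun_apply u (xv n))\<bar>"
              using c0 a0[of n] b0[of n] by (simp add: abs_mult mult_left_mono)
          qed
        qed
        then have "summable (\<lambda>i. (2 / c) * (c * a i * (b i / 2)))" by (rule summable_mult)
        then show ?thesis using c0 by simp
      qed
      have "summable (\<lambda>i. b i powr (p / (p - 1)))" by (rule landau[OF p1 b0 H])
      then show "strong_lp (ereal q) (\<lambda>i. adjoint_op u (ys i))"
        by (simp add: strong_lp_def lp_in_def adjoint_op_def b_def q_def)
    qed
  qed
  show ?thesis using as cs by simp
qed


end
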